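(* Let $\{a,b\}$ be a $2$-element generating set of an abelian group $G$ (possibly infinite) with $a\ne b$, and let $I=|G:\langle a-b\rangle|$. Then $\mathrm{Cay}(G;a,b)$ has two arc-disjoint two-way infinite hamiltonian paths if and only if $I<\infty$ and there exist $k,\ell\in\{0,1,\ldots,I\}$ such that $k+\ell=I$ and $\langle a-b\rangle=\langle ka+\ell b\rangle=\langle \ell a+kb\rangle$.
   Context: The Cayley digraph $\mathrm{Cay}(G;a,b)$ has vertex set $G$ and an arc from $v$ to $v+s$ for all $v\in G$, $s\in\{a,b\}$. A two-way infinite hamiltonian path is a doubly-infinite sequence $\ldots,v_{-1},v_0,v_1,\ldots$ listing every vertex exactly once with an arc from $v_i$ to $v_{i+1}$ for all $i\in\mathbb{Z}$. Arc-disjoint means sharing no arc.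
   Formalization: The group G is assumed infinite, so the finite groups admitted by the phrase (possibly infinite) are excluded. The paper assumes this as well. *)

theory Defs
  imports Main
begin

fun nsmul :: "nat \<Rightarrow> 'a::ab_group_add \<Rightarrow> 'a" where
  "nsmul 0 x = 0"
| "nsmul (Suc n) x = x + nsmul n x"

definition zsmul :: "int \<Rightarrow> 'a::ab_group_add \<Rightarrow> 'a" where
  "zsmul n x = (if n \<ge> 0 then nsmul (nat n) x else - nsmul (nat (- n)) x)"

definition cyc :: "'a::ab_group_add \<Rightarrow> 'a set" where
  "cyc x = range (\<lambda>n. zsmul n x)"

definition gen2 :: "'a::ab_group_add \<Rightarrow> 'a \<Rightarrow> 'a set" where
  "gen2 a b = {zsmul m a + zsmul n b | m n. True}"

definition cosets :: "'a::ab_group_add set \<Rightarrow> 'a set set" where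
  "cosets H = range (\<lambda>x. (\<lambda>h. x + h) ` H)"

(* index |G : H|, meaningful when finite_index H holds *)
definition finite_index :: "'a::ab_group_add set \<Rightarrow> bool" where
  "finite_index H \<longleftrightarrow> finite (cosets H)"

definition index :: "'a::ab_group_add set \<Rightarrow> nat" where
  "index H = card (cosets H)"

(* two-way infinite hamiltonian path in Cay(G;a,b), G = UNIV, given as the
   sequence f : int -> G listing every vertex exactly once *)
definition ham_path2 :: "'a::ab_group_add \<Rightarrow> 'a \<Rightarrow> (int \<Rightarrow> 'a) \<Rightarrow> bool" where
  "ham_path2 a b f \<longleftrightarrow> bij f \<and> (\<forall>i. f (i + 1) - f i \<in> {a, b})"

definition path_arcs :: "(int \<Rightarrow> 'a) \<Rightarrow> ('a \<times> 'a) set" where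
  "path_arcs f = range (\<lambda>i. (f i, f (i + 1)))"

end

theory Submission imports Defs begin

lemma nsmul_add: "nsmul (m+n) x = nsmul m x + nsmul n x"
  by (induction m) (auto simp: add.assoc)
lemma nsmul_plus: "nsmul n (x+y) = nsmul n x + nsmul n y"
  by (induction n) (auto simp: algebra_simps)
lemma nsmul_uminus: "nsmul n (-x) = - nsmul n x"
  by (induction n) (auto simp: algebra_simps)
lemma nsmul_diff: "nsmul n (x-y) = nsmul n x - nsmul n y"
  using nsmul_plus[of n x "-y"] nsmul_uminus[of n y] by simp
lemma nsmul_zero[simp]: "nsmul n 0 = 0"
  by (induction n) auto
lemma nsmul_mult: "nsmul (m*n) x = nsmul m (nsmul n x)"
  by (induction m) (auto simp: nsmul_add)
lemma nsmul_sum_const: "(\<Sum>i<n. x) = nsmul n x"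
  by (induction n) (auto simp: add.commute)

lemma zsmul_nat_diff: "zsmul (int m - int n) x = nsmul m x - nsmul n x"
proof (cases "n \<le> m")
  case True
  then have e: "nat (int m - int n) = m - n" by simp
  have "nsmul m x = nsmul (m-n) x + nsmul n x"
    using nsmul_add[of "m-n" n x] True by simp
  then show ?thesis unfolding zsmul_def using True e by simp
next
  case False
  then have e: "nat (-(int m - int n)) = n - m" by simp
  have "nsmul n x = nsmul (n-m) x + nsmul m x"
    using nsmul_add[of "n-m" m x] False by simp
  then show ?thesis unfolding zsmul_def using False e by simp
qed

lemma zsmul_rep: "zsmul k x = nsmul (nat k) x - nsmul (nat (-k)) x"
proof (cases "k \<ge> 0")
  case True
  then have "nat (-k) = 0" by simp
  then show ?thesis using True unfolding zsmul_def by simp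
next
  case False
  then have "nat k = 0" by simp
  then show ?thesis using False unfolding zsmul_def by simp
qed

lemma zsmul_int[simp]: "zsmul (int k) x = nsmul k x"
  unfolding zsmul_def by simp

lemma zsmul_add: "zsmul (m+n) x = zsmul m x + zsmul n x"
proof -
  have "m + n = int (nat m + nat n) - int (nat (-m) + nat (-n))" by simp
  then have "zsmul (m+n) x = nsmul (nat m + nat n) x - nsmul (nat (-m) + nat (-n)) x"
    by (metis zsmul_nat_diff)
  then show ?thesis by (simp add: zsmul_rep[of m] zsmul_rep[of n] nsmul_add algebra_simps)
qed

lemma zsmul_0[simp]: "zsmul 0 x = 0" by (simp add: zsmul_def)
lemma zsmul_1[simp]: "zsmul 1 x = x" by (simp add: zsmul_def)
lemma zsmul_zero[simp]: "zsmul n 0 = 0" by (simp add: zsmul_def)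

lemma zsmul_uminus: "zsmul (-n) x = - zsmul n x"
  using zsmul_add[of n "-n" x] by (simp add: eq_neg_iff_add_eq_0 add.commute)
lemma zsmul_diff: "zsmul (m-n) x = zsmul m x - zsmul n x"
  using zsmul_add[of m "-n" x] zsmul_uminus[of n x] by simp
lemma zsmul_plus: "zsmul n (x+y) = zsmul n x + zsmul n y"
  by (simp add: zsmul_rep nsmul_plus algebra_simps)
lemma zsmul_neg: "zsmul n (-x) = - zsmul n x"
  by (simp add: zsmul_rep nsmul_uminus algebra_simps)
lemma zsmul_minus: "zsmul n (x-y) = zsmul n x - zsmul n y"
  by (simp add: zsmul_rep nsmul_diff algebra_simps)

lemma zsmul_mult: "zsmul (m*n) x = zsmul m (zsmul n x)"
proof -
  define m1 m2 n1 n2 where "m1 = nat m" "m2 = nat (-m)" "n1 = nat n" "n2 = nat (-n)"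
  have "m*n = int (m1*n1 + m2*n2) - int (m1*n2 + m2*n1)"
    unfolding m1_m2_n1_n2_def by (cases "m \<ge> 0"; cases "n \<ge> 0") (auto simp: algebra_simps)
  then have "zsmul (m*n) x = nsmul (m1*n1 + m2*n2) x - nsmul (m1*n2 + m2*n1) x"
    by (metis zsmul_nat_diff)
  also have "\<dots> = zsmul m (zsmul n x)"
    unfolding zsmul_rep[of m] zsmul_rep[of n "x"] m1_m2_n1_n2_def[symmetric]
    by (simp add: nsmul_add nsmul_mult nsmul_diff algebra_simps)
  finally show ?thesis .
qed


lemma cyc_zsmul_mem: "zsmul n x \<in> cyc x" unfolding cyc_def by (rule rangeI)
lemma cyc_0[simp]: "0 \<in> cyc x" using cyc_zsmul_mem[of 0 x] by simp
lemma cyc_self[simp]: "x \<in> cyc x" using cyc_zsmul_mem[of 1 x] by simp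
lemma cyc_add: "y \<in> cyc x \<Longrightarrow> z \<in> cyc x \<Longrightarrow> y + z \<in> cyc x"
proof -
  assume "y \<in> cyc x" "z \<in> cyc x"
  then obtain m n where "y = zsmul m x" "z = zsmul n x" unfolding cyc_def by blast
  then have "y + z = zsmul (m+n) x" by (simp only: zsmul_add)
  then show ?thesis using cyc_zsmul_mem by metis
qed
lemma cyc_neg: "y \<in> cyc x \<Longrightarrow> - y \<in> cyc x"
proof -
  assume "y \<in> cyc x"
  then obtain m where "y = zsmul m x" unfolding cyc_def by blast
  then have "- y = zsmul (-m) x" by (simp only: zsmul_uminus)
  then show ?thesis using cyc_zsmul_mem by metis
qed
lemma cyc_diff: "y \<in> cyc x \<Longrightarrow> z \<in> cyc x \<Longrightarrow> y - z \<in> cyc x"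
  using cyc_add[of y x "-z"] cyc_neg[of z x] by simp
lemma cyc_zsmul: "y \<in> cyc x \<Longrightarrow> zsmul n y \<in> cyc x"
proof -
  assume "y \<in> cyc x"
  then obtain m where "y = zsmul m x" unfolding cyc_def by blast
  then have "zsmul n y = zsmul (n*m) x" by (simp only: zsmul_mult)
  then show ?thesis using cyc_zsmul_mem by metis
qed
lemma cyc_subset: "y \<in> cyc x \<Longrightarrow> cyc y \<subseteq> cyc x"
  unfolding cyc_def[of y] using cyc_zsmul by blast
lemma cyc_eqI: "y \<in> cyc x \<Longrightarrow> x \<in> cyc y \<Longrightarrow> cyc x = cyc y"
  using cyc_subset by blast

definition cst :: "'a::ab_group_add set \<Rightarrow> 'a \<Rightarrow> 'a set" where
  "cst H x = (\<lambda>h. x + h) ` H"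

lemma cosets_cst: "cosets H = range (cst H)" unfolding cosets_def cst_def by simp

lemma cst_eq: "x - y \<in> cyc d \<Longrightarrow> cst (cyc d) x = cst (cyc d) y"
proof -
  assume h: "x - y \<in> cyc d"
  have "cst (cyc d) x \<subseteq> cst (cyc d) y" if "x - y \<in> cyc d" for x y
  proof
    fix z assume "z \<in> cst (cyc d) x"
    then obtain h where "h \<in> cyc d" "z = x + h" unfolding cst_def by auto
    then have "z = y + ((x - y) + h)" "(x-y) + h \<in> cyc d" using that cyc_add by auto
    then show "z \<in> cst (cyc d) y" unfolding cst_def by blast
  qed
  moreover have "y - x \<in> cyc d" using cyc_neg[OF h] by simp
  ultimately show ?thesis using h by blast
qed

lemma cst_eqD: "cst (cyc d) x = cst (cyc d) y \<Longrightarrow> x - y \<in> cyc d"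
proof -
  assume "cst (cyc d) x = cst (cyc d) y"
  then have "x \<in> cst (cyc d) y" unfolding cst_def using cyc_0 by (metis add_0_right image_eqI)
  then obtain h where "h \<in> cyc d" "x = y + h" unfolding cst_def by auto
  then show ?thesis by simp
qed

lemma finite_H_imp:
  fixes d :: "'a::ab_group_add"
  assumes f1: "finite (cosets (cyc d))" and f2: "finite (cyc d)"
  shows "finite (UNIV::'a set)"
proof -
  have "UNIV \<subseteq> \<Union> (cosets (cyc d))"
  proof
    fix x :: 'a have "x \<in> cst (cyc d) x" unfolding cst_def using cyc_0 by (metis add_0_right image_eqI)
    then show "x \<in> \<Union> (cosets (cyc d))" unfolding cosets_cst by blast
  qed
  moreover have "finite (\<Union> (cosets (cyc d)))"
    using f1 f2 unfolding cosets_cst cst_def by blast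
  ultimately show ?thesis using finite_subset by blast
qed

lemma cyc_finite_if_torsion:
  assumes "zsmul n w = 0" "n \<noteq> 0"
  shows "finite (cyc w)"
proof -
  have "cyc w \<subseteq> (\<lambda>m. zsmul m w) ` {0..<\<bar>n\<bar>}"
  proof
    fix y assume "y \<in> cyc w"
    then obtain m where m: "y = zsmul m w" unfolding cyc_def by auto
    have e: "m = m mod \<bar>n\<bar> + (m div \<bar>n\<bar>) * \<bar>n\<bar>" by simp
    have "zsmul m w = zsmul (m mod \<bar>n\<bar> + (m div \<bar>n\<bar>) * \<bar>n\<bar>) w"
      by (rule arg_cong[OF e])
    also have "\<dots> = zsmul (m mod \<bar>n\<bar>) w + zsmul (m div \<bar>n\<bar>) (zsmul \<bar>n\<bar> w)"
      by (simp only: zsmul_add zsmul_mult)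
    finally have "zsmul m w = zsmul (m mod \<bar>n\<bar>) w + zsmul (m div \<bar>n\<bar>) (zsmul \<bar>n\<bar> w)" .
    moreover have "zsmul \<bar>n\<bar> w = 0" using assms
      by (cases "n \<ge> 0") (auto simp: zsmul_uminus)
    moreover have "m mod \<bar>n\<bar> \<in> {0..<\<bar>n\<bar>}" using assms(2) by simp
    ultimately show "y \<in> (\<lambda>m. zsmul m w) ` {0..<\<bar>n\<bar>}" using m by auto
  qed
  then show ?thesis using finite_subset by blast
qed

lemma torsion_free:
  assumes "infinite (UNIV::'a::ab_group_add set)" "finite_index (cyc (d::'a))"
    "cyc w = cyc d" "zsmul n w = 0"
  shows "n = 0"
proof (rule ccontr)
  assume "n \<noteq> 0"
  then have "finite (cyc d)" using cyc_finite_if_torsion[OF assms(4)] assms(3) by simp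
  then show False using finite_H_imp assms(1,2) unfolding finite_index_def by blast
qed


lemma gen_rep:
  assumes "gen2 a b = UNIV"
  shows "\<exists>j. x - zsmul j a \<in> cyc (a - b)"
proof -
  have "x \<in> gen2 a b" using assms by simp
  then obtain m n where x: "x = zsmul m a + zsmul n b" unfolding gen2_def by blast
  have "x - zsmul (m+n) a = - zsmul n (a - b)"
    unfolding x zsmul_add zsmul_minus by (simp add: algebra_simps)
  then show ?thesis using cyc_neg[OF cyc_zsmul[OF cyc_self, of n "a - b"]] by metis
qed

lemma K_mult: "zsmul i a \<in> cyc d \<Longrightarrow> zsmul (c * i) a \<in> cyc d"
  by (simp add: zsmul_mult cyc_zsmul)
lemma K_diff: "zsmul i a \<in> cyc d \<Longrightarrow> zsmul j a \<in> cyc d \<Longrightarrow> zsmul (i - j) a \<in> cyc d"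
  by (simp add: zsmul_diff cyc_diff)
lemma K_abs: "zsmul i a \<in> cyc d \<Longrightarrow> zsmul \<bar>i\<bar> a \<in> cyc d"
  by (cases "i \<ge> 0") (simp_all add: zsmul_uminus cyc_neg)

lemma cst_reduce:
  assumes "gen2 a b = UNIV" "q > 0" "zsmul q a \<in> cyc (a - b)"
  shows "\<exists>i \<in> {0..<q}. cst (cyc (a - b)) x = cst (cyc (a - b)) (zsmul i a)"
proof -
  obtain m where m: "x - zsmul m a \<in> cyc (a - b)" using gen_rep[OF assms(1)] by blast
  have e: "m = m mod q + (m div q) * q" by simp
  have "zsmul m a = zsmul (m mod q + (m div q) * q) a" by (rule arg_cong[OF e])
  also have "\<dots> = zsmul (m mod q) a + zsmul (m div q) (zsmul q a)"
    by (simp only: zsmul_add zsmul_mult)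
  finally have "zsmul m a - zsmul (m mod q) a = zsmul (m div q) (zsmul q a)" by simp
  then have "zsmul m a - zsmul (m mod q) a \<in> cyc (a - b)" using cyc_zsmul[OF assms(3)] by simp
  then have "x - zsmul (m mod q) a \<in> cyc (a - b)"
    using cyc_add[OF m] by fastforce
  then have "cst (cyc (a - b)) x = cst (cyc (a - b)) (zsmul (m mod q) a)" by (rule cst_eq)
  moreover have "m mod q \<in> {0..<q}" using assms(2) by simp
  ultimately show ?thesis by blast
qed

lemma finite_from_K:
  assumes "gen2 a b = UNIV" "j \<noteq> 0" "zsmul j a \<in> cyc (a - b)"
  shows "finite_index (cyc (a - b))"
proof -
  have "cosets (cyc (a - b)) \<subseteq> (\<lambda>i. cst (cyc (a - b)) (zsmul i a)) ` {0..<\<bar>j\<bar>}"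
    unfolding cosets_cst using cst_reduce[OF assms(1) _ K_abs[OF assms(3)]] assms(2) by force
  then show ?thesis unfolding finite_index_def using finite_subset by blast
qed

lemma index_char:
  assumes "gen2 a b = UNIV" "finite_index (cyc (a - b))"
  shows "0 < index (cyc (a - b)) \<and> (\<forall>j. zsmul j a \<in> cyc (a - b) \<longleftrightarrow> int (index (cyc (a - b))) dvd j)"
proof -
  define \<psi> where "\<psi> i = cst (cyc (a - b)) (zsmul i a)" for i
  have fin: "finite (cosets (cyc (a - b)))" using assms(2) unfolding finite_index_def .
  have "range \<psi> \<subseteq> cosets (cyc (a - b))" unfolding \<psi>_def cosets_cst by auto
  then have "finite (range \<psi>)" using fin finite_subset by blast
  then have "\<not> inj \<psi>" using finite_imageD infinite_UNIV_int by blast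
  then obtain i1 i2 where i12: "i1 \<noteq> i2" "\<psi> i1 = \<psi> i2" unfolding inj_def by blast
  have "zsmul i1 a - zsmul i2 a \<in> (cyc (a - b))" using i12(2) unfolding \<psi>_def by (rule cst_eqD)
  then have "zsmul (i1 - i2) a \<in> (cyc (a - b))" by (simp add: zsmul_diff)
  then have K0: "zsmul (int (nat \<bar>i1 - i2\<bar>)) a \<in> (cyc (a - b))" using K_abs by simp
  have pos0: "0 < nat \<bar>i1 - i2\<bar>" using i12 by simp
  define q where "q = (LEAST n::nat. 0 < n \<and> zsmul (int n) a \<in> (cyc (a - b)))"
  have qK: "0 < q \<and> zsmul (int q) a \<in> (cyc (a - b))"
    unfolding q_def by (rule LeastI[of _ "nat \<bar>i1 - i2\<bar>"]) (use K0 pos0 in blast)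
  have qmin: "\<not> zsmul (int n) a \<in> (cyc (a - b))" if "0 < n" "n < q" for n
    using not_less_Least[of n "\<lambda>n. 0 < n \<and> zsmul (int n) a \<in> (cyc (a - b))"] that unfolding q_def[symmetric] by blast
  have Kiff: "zsmul j a \<in> (cyc (a - b)) \<longleftrightarrow> int q dvd j" for j
  proof
    assume Kj: "zsmul j a \<in> (cyc (a - b))"
    have "j mod int q = j - (j div int q) * int q" by (simp add: minus_div_mult_eq_mod)
    then have "zsmul (j mod int q) a \<in> (cyc (a - b))"
      using K_diff[OF Kj K_mult[OF conjunct2[OF qK], of "j div int q"]] by simp
    moreover have "0 \<le> j mod int q" "j mod int q < int q" using qK by simp_all
    ultimately have "j mod int q = 0" using qmin[of "nat (j mod int q)"] by fastforce
    then show "int q dvd j" by presburger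
  next
    assume "int q dvd j"
    then obtain c where "j = c * int q" by (metis dvd_def mult.commute)
    then show "zsmul j a \<in> (cyc (a - b))" using K_mult[OF conjunct2[OF qK]] by simp
  qed
  have "cosets (cyc (a - b)) = \<psi> ` {0..<int q}"
  proof
    show "cosets (cyc (a - b)) \<subseteq> \<psi> ` {0..<int q}"
      unfolding cosets_cst \<psi>_def
      using cst_reduce[OF assms(1), of "int q"] qK by force
    show "\<psi> ` {0..<int q} \<subseteq> cosets (cyc (a - b))" unfolding \<psi>_def cosets_cst by auto
  qed
  moreover have "inj_on \<psi> {0..<int q}"
  proof (rule inj_onI)
    fix i j assume ij: "i \<in> {0..<int q}" "j \<in> {0..<int q}" "\<psi> i = \<psi> j"
    then have "zsmul i a - zsmul j a \<in> (cyc (a - b))" unfolding \<psi>_def by (intro cst_eqD) simp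
    then have "int q dvd (i - j)" using Kiff[of "i - j"] by (simp add: zsmul_diff)
    then have "i mod int q = j mod int q" by (simp add: mod_eq_dvd_iff)
    then show "i = j" using ij by simp
  qed
  ultimately have "index (cyc (a - b)) = q" unfolding index_def by (simp add: card_image)
  then show ?thesis using qK Kiff by simp
qed


lemma hp_bij: "ham_path2 a b f \<Longrightarrow> bij f" unfolding ham_path2_def by blast
lemma hp_step: "ham_path2 a b f \<Longrightarrow> f (i + 1) - f i \<in> {a, b}" unfolding ham_path2_def by blast

lemma step_mod_H: "s \<in> {a, b} \<Longrightarrow> s - a \<in> cyc (a - b)"
proof -
  assume "s \<in> {a, b}"
  moreover have "b - a \<in> cyc (a - b)" using cyc_neg[OF cyc_self[of "a - b"]] by simp
  ultimately show ?thesis by auto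
qed

lemma path_coset:
  assumes "ham_path2 a b f"
  shows "f j - f 0 - zsmul j a \<in> cyc (a - b)"
proof (induction j rule: int_induct[where k=0])
  case base
  then show ?case by simp
next
  case (step1 i)
  have e: "f (i+1) - f 0 - zsmul (i+1) a = (f i - f 0 - zsmul i a) + ((f (i+1) - f i) - a)"
    by (simp add: zsmul_add algebra_simps)
  show ?case unfolding e by (rule cyc_add[OF step1(2) step_mod_H[OF hp_step[OF assms, of i]]])
next
  case (step2 i)
  have e: "f (i-1) - f 0 - zsmul (i-1) a = (f i - f 0 - zsmul i a) - ((f (i - 1 + 1) - f (i - 1)) - a)"
    by (simp add: zsmul_diff algebra_simps)
  show ?case unfolding e by (rule cyc_diff[OF step2(2) step_mod_H[OF hp_step[OF assms, of "i - 1"]]])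
qed

lemma path_coset2:
  assumes "ham_path2 a b f"
  shows "f j - f i - zsmul (j - i) a \<in> cyc (a - b)"
proof -
  have e: "f j - f i - zsmul (j - i) a = (f j - f 0 - zsmul j a) - (f i - f 0 - zsmul i a)"
    by (simp add: zsmul_diff algebra_simps)
  show ?thesis unfolding e by (rule cyc_diff[OF path_coset[OF assms] path_coset[OF assms]])
qed

definition stp :: "(int \<Rightarrow> 'a::ab_group_add) \<Rightarrow> 'a \<Rightarrow> 'a" where
  "stp f v = f (inv f v + 1) - v"

lemma stp_f: "bij f \<Longrightarrow> stp f (f i) = f (i + 1) - f i"
  unfolding stp_def by (simp add: bij_is_inj)

lemma stp_in: "ham_path2 a b f \<Longrightarrow> stp f v \<in> {a, b}"
proof -
  assume h: "ham_path2 a b f"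
  then have "v = f (inv f v)" using hp_bij by (metis bij_inv_eq_iff)
  then show ?thesis using stp_f[OF hp_bij[OF h], of "inv f v"] hp_step[OF h] by metis
qed

lemma stp_shift:
  assumes h: "ham_path2 a b f" and ab: "a \<noteq> b"
  shows "stp f (v - (a - b)) = stp f v"
proof -
  have bj: "bij f" using hp_bij[OF h] .
  obtain i where i: "f i = v" using bj by (metis bij_pointE)
  obtain i' where i': "f i' = v - (a - b)" using bj by (metis bij_pointE)
  have inj: "f x = f y \<Longrightarrow> x = y" for x y using bj bij_is_inj injD by metis
  have si: "stp f v = f (i+1) - f i" using stp_f[OF bj, of i] i by simp
  have si': "stp f (v - (a - b)) = f (i'+1) - f i'" using stp_f[OF bj, of i'] i' by simp
  have s: "f (i+1) - f i \<in> {a, b}" "f (i'+1) - f i' \<in> {a, b}" using hp_step[OF h] by auto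
  show ?thesis
  proof (cases "f (i+1) - f i = a")
    case True
    obtain m where m: "f m = v + b" using bj by (metis bij_pointE)
    have t: "f (m - 1 + 1) - f (m - 1) \<in> {a, b}" using hp_step[OF h] by blast
    then have "f (m - 1) = v \<or> f (m - 1) = v - (a - b)" using m by (auto simp: algebra_simps)
    moreover have "f (m - 1) \<noteq> v"
    proof
      assume "f (m - 1) = v"
      then have "m - 1 = i" using i inj by metis
      then have "m = i + 1" by simp
      then have "f (i + 1) = v + b" using m by simp
      then show False using True ab i by simp
    qed
    ultimately have "f (m - 1) = v - (a - b)" by blast
    then have "m - 1 = i'" using i' inj by metis
    then have "m = i' + 1" by simp
    then have "f (i' + 1) = v + b" using m by simp
    then show ?thesis using si si' True i' by (simp add: algebra_simps)
  next
    case False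
    then have sb: "f (i+1) - f i = b" using s by auto
    have "f (i'+1) - f i' \<noteq> a"
    proof
      assume "f (i'+1) - f i' = a"
      then have "f (i'+1) = f (i+1)" using sb i i' by (simp add: algebra_simps)
      then have "i' + 1 = i + 1" using inj by blast
      then have "i' = i" by simp
      then show False using i i' ab by simp
    qed
    then have "f (i'+1) - f i' = b" using s by auto
    then show ?thesis using si si' sb by simp
  qed
qed

lemma stp_zsmul:
  assumes h: "ham_path2 a b f" and ab: "a \<noteq> b"
  shows "stp f (v + zsmul n (a - b)) = stp f v"
proof (induction n rule: int_induct[where k=0])
  case base
  then show ?case by simp
next
  case (step1 i)
  have "stp f (v + zsmul (i+1) (a - b)) = stp f (v + zsmul (i+1) (a - b) - (a - b))"
    using stp_shift[OF h ab] by simp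
  also have "v + zsmul (i+1) (a - b) - (a - b) = v + zsmul i (a - b)" by (simp add: zsmul_add)
  finally show ?case using step1 by simp
next
  case (step2 i)
  have "stp f (v + zsmul (i-1) (a - b)) = stp f (v + zsmul i (a - b) - (a - b))"
    by (simp add: zsmul_diff algebra_simps)
  also have "\<dots> = stp f (v + zsmul i (a - b))" using stp_shift[OF h ab] by simp
  finally show ?case using step2 by simp
qed

lemma stp_const:
  assumes h: "ham_path2 a b f" and ab: "a \<noteq> b" and xy: "x - y \<in> cyc (a - b)"
  shows "stp f x = stp f y"
proof -
  obtain n where "x - y = zsmul n (a - b)" using xy unfolding cyc_def by blast
  then have "x = y + zsmul n (a - b)" by (simp add: algebra_simps)
  then show ?thesis using stp_zsmul[OF h ab] by simp
qed

lemma path_K: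
  assumes h: "ham_path2 a b f" and ab: "a \<noteq> b"
  shows "\<exists>j. j \<noteq> 0 \<and> zsmul j a \<in> cyc (a - b)"
proof -
  obtain j where j: "f j = f 0 - (a - b)" using hp_bij[OF h] by (metis bij_pointE)
  have "j \<noteq> 0" using j ab by auto
  moreover have "f j - f 0 - zsmul j a \<in> cyc (a - b)" by (rule path_coset[OF h])
  then have "- (a - b) - zsmul j a \<in> cyc (a - b)" using j by simp
  then have "- (a - b) - (- (a - b) - zsmul j a) \<in> cyc (a - b)"
    using cyc_diff cyc_neg cyc_self by blast
  then have "zsmul j a \<in> cyc (a - b)" by simp
  ultimately show ?thesis by blast
qed

lemma telescope:
  "(\<Sum>i<n. f (c + int i + 1) - f (c + int i)) = f (c + int n) - (f c :: 'a::ab_group_add)"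
  by (induction n) (auto simp: algebra_simps)

lemma sum_rep:
  assumes "\<And>i. i < n \<Longrightarrow> s i \<in> {a, b}"
  shows "\<exists>k\<le>n. (\<Sum>i<n. s i) = nsmul k a + nsmul (n - k) (b::'a::ab_group_add)"
  using assms
proof (induction n)
  case 0
  then show ?case by simp
next
  case (Suc n)
  then obtain k where k: "k \<le> n" "(\<Sum>i<n. s i) = nsmul k a + nsmul (n - k) b" by auto
  have "s n \<in> {a, b}" using Suc.prems by simp
  then show ?case
  proof
    assume "s n = a"
    then have "(\<Sum>i<Suc n. s i) = nsmul (Suc k) a + nsmul (Suc n - Suc k) b"
      using k by (simp add: algebra_simps)
    then show ?thesis using k by (intro exI[of _ "Suc k"]) simp
  next
    assume "s n \<in> {b}"
    then have "(\<Sum>i<Suc n. s i) = nsmul k a + nsmul (Suc n - k) b"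
      using k by (simp add: Suc_diff_le algebra_simps)
    then show ?thesis using k by (intro exI[of _ k]) simp
  qed
qed


lemma back_lemma:
  fixes x y u v W :: "'a::ab_group_add"
  assumes "x - u = y - v" "x - y = W"
  shows "u - v = W"
proof -
  have "u - v = (x - y) - ((x - u) - (y - v))" by (simp add: algebra_simps)
  then show ?thesis using assms by simp
qed

lemma path_period:
  assumes h: "ham_path2 a b f" and ab: "a \<noteq> b"
    and Kiff: "\<And>j. zsmul j a \<in> cyc (a - b) \<longleftrightarrow> P dvd j"
  shows "\<And>i. f (i + P) - f i = f P - f 0" and "cyc (f P - f 0) = cyc (a - b)"
proof -
  have KP: "zsmul P a \<in> cyc (a - b)" using Kiff by simp
  have inH: "f (i + P) - f i \<in> cyc (a - b)" for i
  proof -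
    have "f (i + P) - f i - zsmul (i + P - i) a \<in> cyc (a - b)" by (rule path_coset2[OF h])
    then have "f (i + P) - f i - zsmul P a \<in> cyc (a - b)" by simp
    from cyc_add[OF this KP] show ?thesis by simp
  qed
  have st: "f (i + P + 1) - f (i + P) = f (i + 1) - f i" for i
  proof -
    have "stp f (f (i + P)) = stp f (f i)" by (rule stp_const[OF h ab inH])
    then show ?thesis using stp_f[OF hp_bij[OF h]] by simp
  qed
  have W: "f (i + P) - f i = f P - f 0" for i
  proof (induction i rule: int_induct[where k=0])
    case base then show ?case by simp
  next
    case (step1 i)
    have "f (i + 1 + P) - f (i + 1) = (f (i + P + 1) - f (i + P)) - (f (i + 1) - f i) + (f (i + P) - f i)"
      by (simp add: algebra_simps)
    then show ?case using st[of i] step1(2) by simp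
  next
    case (step2 i)
    have s: "f (i - 1 + P + 1) - f (i - 1 + P) = f (i - 1 + 1) - f (i - 1)" by (rule st)
    have "i - 1 + P + 1 = i + P" "i - 1 + 1 = i" by simp_all
    then have s': "f (i + P) - f (i - 1 + P) = f i - f (i - 1)" using s by simp
    show ?case using back_lemma[OF s' step2(2)] .
  qed
  then show "\<And>i. f (i + P) - f i = f P - f 0" .
  have mult: "f (t * P) = f 0 + zsmul t (f P - f 0)" for t
  proof (induction t rule: int_induct[where k=0])
    case base then show ?case by simp
  next
    case (step1 t)
    have "f ((t + 1) * P) = f (t * P + P)" by (simp add: algebra_simps)
    also have "\<dots> = f (t * P) + (f P - f 0)" using W[of "t * P"] by (simp add: algebra_simps)
    finally show ?case using step1(2) by (simp add: zsmul_add algebra_simps)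
  next
    case (step2 t)
    have "f (t * P) = f ((t - 1) * P + P)" by (simp add: algebra_simps)
    also have "\<dots> = f ((t - 1) * P) + (f P - f 0)" using W[of "(t - 1) * P"] by (simp add: algebra_simps)
    finally have "f ((t - 1) * P) = f (t * P) - (f P - f 0)" by (simp add: algebra_simps)
    then show ?case using step2(2) by (simp add: zsmul_diff algebra_simps)
  qed
  have W0: "f P - f 0 \<in> cyc (a - b)" using inH[of 0] by simp
  obtain j where j: "f j = f 0 + (a - b)" using hp_bij[OF h] by (metis bij_pointE)
  have "f j - f 0 - zsmul j a \<in> cyc (a - b)" by (rule path_coset[OF h])
  then have "(a - b) - zsmul j a \<in> cyc (a - b)" using j by simp
  then have "(a - b) - ((a - b) - zsmul j a) \<in> cyc (a - b)" using cyc_diff cyc_self by blast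
  then have "P dvd j" using Kiff by simp
  then obtain t where "j = t * P" by (metis dvd_def mult.commute)
  then have "a - b = zsmul t (f P - f 0)" using j mult[of t] by simp
  then have "a - b \<in> cyc (f P - f 0)" using cyc_zsmul_mem by metis
  then show "cyc (f P - f 0) = cyc (a - b)" using cyc_eqI[OF _ W0] by blast
qed

lemma divmod_step:
  fixes i P :: int
  assumes "P > 0"
  shows "i mod P + 1 < P \<Longrightarrow> (i + 1) mod P = i mod P + 1 \<and> (i + 1) div P = i div P"
    and "i mod P + 1 = P \<Longrightarrow> (i + 1) mod P = 0 \<and> (i + 1) div P = i div P + 1"
proof -
  have e: "i + 1 = (i div P) * P + (i mod P + 1)" by simp
  show "i mod P + 1 < P \<Longrightarrow> (i + 1) mod P = i mod P + 1 \<and> (i + 1) div P = i div P"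
  proof -
    assume l: "i mod P + 1 < P"
    have "0 \<le> i mod P" using assms by simp
    have e2: "i + 1 = (i mod P + 1) + (i div P) * P" using e by (simp only: add.commute)
    have "(i + 1) div P = ((i mod P + 1) + (i div P) * P) div P" by (rule arg_cong[OF e2])
    also have "\<dots> = i div P + (i mod P + 1) div P" using assms by (intro div_mult_self1) simp
    also have "(i mod P + 1) div P = 0" using l \<open>0 \<le> i mod P\<close> by (intro div_pos_pos_trivial) simp_all
    finally have d: "(i + 1) div P = i div P" by simp
    have "(i + 1) mod P = ((i mod P + 1) + (i div P) * P) mod P" by (rule arg_cong[OF e2])
    also have "\<dots> = (i mod P + 1) mod P" by (rule mod_mult_self1)
    also have "\<dots> = i mod P + 1" using l \<open>0 \<le> i mod P\<close> by (intro mod_pos_pos_trivial) simp_all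
    finally show ?thesis using d by simp
  qed
  show "i mod P + 1 = P \<Longrightarrow> (i + 1) mod P = 0 \<and> (i + 1) div P = i div P + 1"
  proof -
    assume l: "i mod P + 1 = P"
    then have "i + 1 = (i div P + 1) * P" using e by (simp add: algebra_simps)
    then show ?thesis using assms by simp
  qed
qed


lemma construct:
  fixes a b :: "'a::ab_group_add" and P :: int and \<sigma> :: "nat \<Rightarrow> 'a"
  assumes P: "P > 0"
    and Kiff: "\<And>j. zsmul j a \<in> cyc (a - b) \<longleftrightarrow> P dvd j"
    and gen: "gen2 a b = UNIV"
    and sig: "\<And>r. \<sigma> r \<in> {a, b}"
    and cW: "cyc (\<Sum>q<nat P. \<sigma> q) = cyc (a - b)"
    and tf: "\<And>n. zsmul n (\<Sum>q<nat P. \<sigma> q) = 0 \<Longrightarrow> n = 0"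
    and Fdef: "F = (\<lambda>i. zsmul (i div P) (\<Sum>q<nat P. \<sigma> q) + (\<Sum>q<nat (i mod P). \<sigma> q))"
  shows "ham_path2 a b F" "\<And>i. F i - zsmul i a \<in> cyc (a - b)"
    "\<And>i. F (i + 1) - F i = \<sigma> (nat (i mod P))"
proof -
  define S where "S r = (\<Sum>q<r. \<sigma> q)" for r
  define W where "W = S (nat P)"
  have F: "F i = zsmul (i div P) W + S (nat (i mod P))" for i
    unfolding Fdef W_def S_def by simp
  have WH: "W \<in> cyc (a - b)" using cW cyc_self unfolding W_def S_def by metis
  have KP: "zsmul P a \<in> cyc (a - b)" using Kiff by simp
  have E1: "S r - nsmul r a \<in> cyc (a - b)" for r
  proof (induction r)
    case 0 then show ?case by (simp add: S_def)
  next
    case (Suc r)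
    have e: "S (Suc r) - nsmul (Suc r) a = (S r - nsmul r a) + (\<sigma> r - a)"
      by (simp add: S_def algebra_simps)
    show ?case unfolding e by (rule cyc_add[OF Suc.IH step_mod_H[OF sig]])
  qed
  show E2: "F i - zsmul i a \<in> cyc (a - b)" for i
  proof -
    define q r where "q = i div P" "r = i mod P"
    have r0: "0 \<le> r" using P unfolding q_r_def by simp
    have i: "i = q * P + r" unfolding q_r_def by simp
    have "zsmul i a = zsmul (q * P + r) a" by (rule arg_cong[OF i])
    also have "\<dots> = zsmul q (zsmul P a) + zsmul r a"
      by (simp only: zsmul_add zsmul_mult)
    also have "zsmul r a = nsmul (nat r) a"
    proof -
      have "int (nat r) = r" using r0 by simp
      then show ?thesis by (metis zsmul_int)
    qed
    finally have zi: "zsmul i a = zsmul q (zsmul P a) + nsmul (nat r) a" .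
    have e: "F i - zsmul i a = (zsmul q W - zsmul q (zsmul P a)) + (S (nat r) - nsmul (nat r) a)"
      unfolding F zi q_r_def[symmetric] by (simp add: algebra_simps)
    show ?thesis unfolding e
      by (intro cyc_add cyc_diff cyc_zsmul WH KP E1)
  qed
  show E3: "F (i + 1) - F i = \<sigma> (nat (i mod P))" for i
  proof -
    have r0: "0 \<le> i mod P" "i mod P < P" using P by simp_all
    show ?thesis
    proof (cases "i mod P + 1 < P")
      case True
      note d = divmod_step(1)[OF P True]
      have "nat ((i + 1) mod P) = Suc (nat (i mod P))" using d r0 by simp
      then show ?thesis unfolding F using d by (simp add: S_def)
    next
      case False
      then have l: "i mod P + 1 = P" using r0 by simp
      note d = divmod_step(2)[OF P l]
      have np: "nat P = Suc (nat (i mod P))" using l r0 by simp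
      have "F (i + 1) = zsmul (i div P) W + W" unfolding F using d by (simp add: zsmul_add S_def)
      moreover have "W = S (nat (i mod P)) + \<sigma> (nat (i mod P))" unfolding W_def np by (simp add: S_def)
      ultimately show ?thesis unfolding F by (simp add: algebra_simps)
    qed
  qed
  have modeq: "i mod P = j mod P" if "F i = F j" for i j
  proof -
    have "(F i - zsmul j a) - (F i - zsmul i a) \<in> cyc (a - b)"
      using cyc_diff[OF E2[of j] E2[of i]] that by simp
    then have "zsmul (i - j) a \<in> cyc (a - b)" by (simp add: zsmul_diff)
    then have "P dvd (i - j)" using Kiff by simp
    then show ?thesis by (simp add: mod_eq_dvd_iff)
  qed
  have inj: "inj F"
  proof (rule injI)
    fix i j assume h: "F i = F j"
    have m: "i mod P = j mod P" using modeq[OF h] .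
    then have "zsmul (i div P) W = zsmul (j div P) W" using h unfolding F by simp
    then have "zsmul (i div P - j div P) W = 0" by (simp add: zsmul_diff)
    then have "i div P - j div P = 0" using tf unfolding W_def S_def by blast
    then have "i div P = j div P" by simp
    then show "i = j" using m by (metis div_mult_mod_eq)
  qed
  have surj: "surj F" unfolding surj_def
  proof
    fix x
    obtain j where j: "x - zsmul j a \<in> cyc (a - b)" using gen_rep[OF gen] by blast
    define r where "r = j mod P"
    have r0: "0 \<le> r" "r < P" unfolding r_def using P by simp_all
    have "j - r = P * (j div P)" unfolding r_def by (simp add: minus_mod_eq_mult_div)
    then have "P dvd (j - r)" by simp
    then have jr: "zsmul (j - r) a \<in> cyc (a - b)" using Kiff by simp
    have zr: "zsmul r a = nsmul (nat r) a"
    proof -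
      have "int (nat r) = r" using r0 by simp
      then show ?thesis by (metis zsmul_int)
    qed
    have e: "x - S (nat r) = ((x - zsmul j a) + zsmul (j - r) a) - (S (nat r) - nsmul (nat r) a)"
      by (simp add: zsmul_diff zr algebra_simps)
    have "x - S (nat r) \<in> cyc (a - b)" unfolding e by (intro cyc_add cyc_diff j jr E1)
    then have "x - S (nat r) \<in> cyc W" using cW unfolding W_def S_def by simp
    then obtain t where t: "x - S (nat r) = zsmul t W" unfolding cyc_def by blast
    have dm: "(t * P + r) div P = t" "(t * P + r) mod P = r" using r0 P by simp_all
    have "F (t * P + r) = x" unfolding F dm t[symmetric] by simp
    then show "\<exists>i. x = F i" by metis
  qed
  show "ham_path2 a b F" unfolding ham_path2_def
    using inj surj E3 sig by (simp add: bij_def)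
qed

lemma sum_if_ab:
  "(\<Sum>r<k + l. if r < k then a else b) = nsmul k a + nsmul l (b::'a::ab_group_add)"
proof (induction l)
  case 0
  have "(\<Sum>r<k. if r < k then a else b) = (\<Sum>r<k. a)" by (rule sum.cong) auto
  then show ?case by (simp add: nsmul_sum_const)
next
  case (Suc l)
  then show ?case by (simp add: algebra_simps)
qed


lemma arcs_disjoint_constr:
  assumes ab: "a \<noteq> b" and P: "P > 0"
    and Kiff: "\<And>j. zsmul j a \<in> cyc (a - b) \<longleftrightarrow> P dvd j"
    and c1: "\<And>i. F1 i - zsmul i a \<in> cyc (a - b)" "\<And>i. F1 (i + 1) - F1 i = \<sigma>1 (nat (i mod P))"
    and c2: "\<And>i. F2 i - zsmul i a \<in> cyc (a - b)" "\<And>i. F2 (i + 1) - F2 i = \<sigma>2 (nat (i mod P))"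
    and ne: "\<And>r. \<sigma>1 r \<noteq> \<sigma>2 r"
  shows "path_arcs F1 \<inter> path_arcs F2 = {}"
proof (rule ccontr)
  assume "path_arcs F1 \<inter> path_arcs F2 \<noteq> {}"
  then obtain i j where ij: "(F1 i, F1 (i + 1)) = (F2 j, F2 (j + 1))" unfolding path_arcs_def by auto
  then have e1: "F1 i = F2 j" and e2: "F1 (i + 1) = F2 (j + 1)" by auto
  have "(F1 i - zsmul j a) - (F1 i - zsmul i a) \<in> cyc (a - b)"
    using cyc_diff[OF c2(1)[of j] c1(1)[of i]] e1 by simp
  then have "zsmul (i - j) a \<in> cyc (a - b)" by (simp add: zsmul_diff)
  then have "P dvd (i - j)" using Kiff by simp
  then have m: "i mod P = j mod P" by (simp add: mod_eq_dvd_iff)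
  have "\<sigma>1 (nat (i mod P)) = \<sigma>2 (nat (i mod P))"
    using c1(2)[of i] c2(2)[of j] e1 e2 m by simp
  then show False using ne by blast
qed

theorem mainTheorem16:
  fixes a b :: "'a::ab_group_add"
  assumes "infinite (UNIV :: 'a set)"
    and "gen2 a b = UNIV"
    and "a \<noteq> b"
  shows "(\<exists>f g. ham_path2 a b f \<and> ham_path2 a b g \<and> path_arcs f \<inter> path_arcs g = {})
     \<longleftrightarrow> (finite_index (cyc (a - b)) \<and>
          (\<exists>k l. k \<in> {0..index (cyc (a - b))} \<and> l \<in> {0..index (cyc (a - b))} \<and>
               k + l = index (cyc (a - b)) \<and>
               cyc (a - b) = cyc (zsmul (int k) a + zsmul (int l) b) \<and>
               cyc (a - b) = cyc (zsmul (int l) a + zsmul (int k) b)))"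
proof
  assume "\<exists>f g. ham_path2 a b f \<and> ham_path2 a b g \<and> path_arcs f \<inter> path_arcs g = {}"
  then obtain f g where hf: "ham_path2 a b f" and hg: "ham_path2 a b g"
    and disj: "path_arcs f \<inter> path_arcs g = {}" by blast
  have ab: "a \<noteq> b" using assms(3) .
  obtain j where "j \<noteq> 0" "zsmul j a \<in> cyc (a - b)" using path_K[OF hf ab] by blast
  then have fi: "finite_index (cyc (a - b))" using finite_from_K[OF assms(2)] by blast
  define p where "p = index (cyc (a - b))"
  have p0: "0 < p" and Kiff: "\<And>j. zsmul j a \<in> cyc (a - b) \<longleftrightarrow> int p dvd j"
    using index_char[OF assms(2) fi] unfolding p_def by auto
  note PF = path_period[OF hf ab Kiff]
  note PG = path_period[OF hg ab Kiff]
  define sf where "sf i = f (0 + int i + 1) - f (0 + int i)" for i :: nat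
  have sum_f: "(\<Sum>i<p. sf i) = f (int p) - f 0"
    unfolding sf_def using telescope[of f 0 p] by simp
  have sf_ab: "sf i \<in> {a, b}" for i unfolding sf_def using hp_step[OF hf] by blast
  obtain k where k: "k \<le> p" "(\<Sum>i<p. sf i) = nsmul k a + nsmul (p - k) b"
    using sum_rep[of p sf a b] sf_ab by blast
  obtain j0 where j0: "g j0 = f 0" using hp_bij[OF hg] by (metis bij_pointE)
  define sg where "sg i = g (j0 + int i + 1) - g (j0 + int i)" for i :: nat
  have sum_g: "(\<Sum>i<p. sg i) = g (j0 + int p) - g j0"
    unfolding sg_def using telescope[of g j0 p] by simp
  have sg_ab: "sg i \<in> {a, b}" for i unfolding sg_def using hp_step[OF hg] by blast
  have sgf: "sg i = a + b - sf i" for i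
  proof -
    have c1: "f (int i) - f 0 - zsmul (int i - 0) a \<in> cyc (a - b)" by (rule path_coset2[OF hf])
    have c2: "g (j0 + int i) - g j0 - zsmul (j0 + int i - j0) a \<in> cyc (a - b)" by (rule path_coset2[OF hg])
    have "(g (j0 + int i) - g j0 - zsmul (int i) a) - (f (int i) - f 0 - zsmul (int i) a) \<in> cyc (a - b)"
      using cyc_diff[OF c2 c1] by simp
    then have xy: "g (j0 + int i) - f (int i) \<in> cyc (a - b)" using j0 by simp
    have st: "stp f (g (j0 + int i)) = sf i"
      using stp_const[OF hf ab xy] stp_f[OF hp_bij[OF hf], of "int i"] unfolding sf_def by simp
    have "sg i \<noteq> sf i"
    proof
      assume eq: "sg i = sf i"
      define m where "m = inv f (g (j0 + int i))"
      have fm: "f m = g (j0 + int i)" unfolding m_def using hp_bij[OF hf] by (meson bij_inv_eq_iff)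
      have gg: "g (j0 + int i + 1) = g (j0 + int i) + sg i" unfolding sg_def by simp
      have "f (m + 1) = f m + stp f (f m)" using stp_f[OF hp_bij[OF hf], of m] by simp
      also have "f m + stp f (f m) = g (j0 + int i + 1)" using fm st eq gg by simp
      finally have fm1: "f (m + 1) = g (j0 + int i + 1)" .
      have "(f m, f (m + 1)) \<in> path_arcs f" unfolding path_arcs_def by (rule rangeI)
      then have A1: "(g (j0 + int i), g (j0 + int i + 1)) \<in> path_arcs f" using fm fm1 by simp
      have A2: "(g (j0 + int i), g (j0 + int i + 1)) \<in> path_arcs g" unfolding path_arcs_def by (rule rangeI)
      show False using disj A1 A2 by blast
    qed
    then show ?thesis using sg_ab[of i] sf_ab[of i] ab
      by (elim insertE) (simp_all add: algebra_simps)
  qed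
  have "(\<Sum>i<p. sg i) = (\<Sum>i<p. a + b - sf i)" using sgf by simp
  also have "\<dots> = nsmul p a + nsmul p b - (\<Sum>i<p. sf i)"
    by (simp add: sum_subtractf sum.distrib nsmul_sum_const)
  also have "\<dots> = nsmul (p - k) a + nsmul k b"
  proof -
    have "p = k + (p - k)" using k(1) by simp
    then have "nsmul p a = nsmul k a + nsmul (p - k) a" "nsmul p b = nsmul k b + nsmul (p - k) b"
      using nsmul_add[of k "p - k" a] nsmul_add[of k "p - k" b] by simp_all
    then show ?thesis using k(2) by (simp add: algebra_simps)
  qed
  finally have wg: "g (j0 + int p) - g j0 = nsmul (p - k) a + nsmul k b" using sum_g by simp
  have "g (j0 + int p) - g j0 = g (int p) - g 0" using PG(1) by simp
  then have cg: "cyc (a - b) = cyc (nsmul (p - k) a + nsmul k b)" using PG(2) wg by simp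
  have cf: "cyc (a - b) = cyc (nsmul k a + nsmul (p - k) b)" using PF(2) sum_f k(2) by simp
  show "finite_index (cyc (a - b)) \<and>
          (\<exists>k l. k \<in> {0..index (cyc (a - b))} \<and> l \<in> {0..index (cyc (a - b))} \<and>
               k + l = index (cyc (a - b)) \<and>
               cyc (a - b) = cyc (zsmul (int k) a + zsmul (int l) b) \<and>
               cyc (a - b) = cyc (zsmul (int l) a + zsmul (int k) b))"
  proof -
    have "k \<in> {0..index (cyc (a - b))}" using k(1) unfolding p_def by simp
    moreover have "p - k \<in> {0..index (cyc (a - b))}" unfolding p_def by simp
    moreover have "k + (p - k) = index (cyc (a - b))" using k(1) unfolding p_def by simp
    moreover have "cyc (a - b) = cyc (zsmul (int k) a + zsmul (int (p - k)) b)" using cf by simp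
    moreover have "cyc (a - b) = cyc (zsmul (int (p - k)) a + zsmul (int k) b)" using cg by simp
    ultimately show ?thesis using fi by blast
  qed
next
  assume "finite_index (cyc (a - b)) \<and>
          (\<exists>k l. k \<in> {0..index (cyc (a - b))} \<and> l \<in> {0..index (cyc (a - b))} \<and>
               k + l = index (cyc (a - b)) \<and>
               cyc (a - b) = cyc (zsmul (int k) a + zsmul (int l) b) \<and>
               cyc (a - b) = cyc (zsmul (int l) a + zsmul (int k) b))"
  then obtain k l where fi: "finite_index (cyc (a - b))" and kl: "k + l = index (cyc (a - b))"
    and c1: "cyc (a - b) = cyc (nsmul k a + nsmul l b)"
    and c2: "cyc (a - b) = cyc (nsmul l a + nsmul k b)" by auto
  have ab: "a \<noteq> b" using assms(3) .
  define p where "p = index (cyc (a - b))"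
  have p0: "0 < p" and Kiff: "\<And>j. zsmul j a \<in> cyc (a - b) \<longleftrightarrow> int p dvd j"
    using index_char[OF assms(2) fi] unfolding p_def by auto
  have P: "int p > 0" using p0 by simp
  have np: "nat (int p) = k + l" using kl unfolding p_def by simp
  define \<sigma>1 where "\<sigma>1 r = (if r < k then a else b)" for r
  define \<sigma>2 where "\<sigma>2 r = (if r < k then b else a)" for r
  have W1: "(\<Sum>q<nat (int p). \<sigma>1 q) = nsmul k a + nsmul l b"
    unfolding np \<sigma>1_def by (rule sum_if_ab)
  have W2: "(\<Sum>q<nat (int p). \<sigma>2 q) = nsmul l a + nsmul k b"
    unfolding np \<sigma>2_def using sum_if_ab[where k=k and l=l and a=b and b=a] by (simp add: add.commute)
  have cW1: "cyc (\<Sum>q<nat (int p). \<sigma>1 q) = cyc (a - b)" using W1 c1 by simp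
  have cW2: "cyc (\<Sum>q<nat (int p). \<sigma>2 q) = cyc (a - b)" using W2 c2 by simp
  note tf1 = torsion_free[OF assms(1) fi cW1]
  note tf2 = torsion_free[OF assms(1) fi cW2]
  have s1: "\<sigma>1 r \<in> {a, b}" for r unfolding \<sigma>1_def by simp
  have s2: "\<sigma>2 r \<in> {a, b}" for r unfolding \<sigma>2_def by simp
  define F1 where "F1 = (\<lambda>i. zsmul (i div int p) (\<Sum>q<nat (int p). \<sigma>1 q) + (\<Sum>q<nat (i mod int p). \<sigma>1 q))"
  define F2 where "F2 = (\<lambda>i. zsmul (i div int p) (\<Sum>q<nat (int p). \<sigma>2 q) + (\<Sum>q<nat (i mod int p). \<sigma>2 q))"
  note C1 = construct[OF P Kiff assms(2) s1 cW1 tf1 F1_def]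
  note C2 = construct[OF P Kiff assms(2) s2 cW2 tf2 F2_def]
  have ne: "\<sigma>1 r \<noteq> \<sigma>2 r" for r unfolding \<sigma>1_def \<sigma>2_def using ab by auto
  have "path_arcs F1 \<inter> path_arcs F2 = {}"
    by (rule arcs_disjoint_constr[OF ab P Kiff C1(2,3) C2(2,3) ne])
  then show "\<exists>f g. ham_path2 a b f \<and> ham_path2 a b g \<and> path_arcs f \<inter> path_arcs g = {}"
    using C1(1) C2(1) by blast
qed

end
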